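(* Let $(X,\mathbf P,\mathbf n)$ be a homogeneous hierarchical structure of degree $n\ge2$, and suppose there are constants $C_1,C_2>0$ and $\rho>1$ such that $C_1\rho^{-r}\le p_r\le C_2\rho^{-r}$ for all sufficiently large $r$. Let $\mu$ be the spectral measure of $\Delta$ and $\delta_x$ (independent of $x$). Then: (1) $\lim_{t\downarrow0}\frac{\log\mu([1-t,1])}{\log t}$ exists and equals $\frac{\log n}{\log\rho}$; i.e. the spectral dimension is $\mathrm d(n,\rho)=2\frac{\log n}{\log\rho}$. In particular $0<\mathrm d(n,\rho)\le2$ iff $n\le\rho$. (2) For $x\in X$ let $R=\sum_{k=0}^\infty\langle\delta_x,\Delta^k\delta_x\rangle\in[0,\infty]$. Then $R=\infty$ (the random walk with transition probabilities $\langle\delta_x,\Delta\delta_y\rangle$ is recurrent) if $0<\mathrm d(n,\rho)\le2$, i.e. $\rho\ge n$, and $R<\infty$ (transient) if $\mathrm d(n,\rho)>2$, i.e. $\rho<n$.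
   Context: $X$ is an infinite countable set, $\delta_x$ the Kronecker delta at $x$. A hierarchical structure $(X,\mathbf P,\mathbf n)$ consists of a sequence $\mathbf n=(n_r)_{r\ge0}$ of positive integers and partitions $\mathcal P_r$ of $X$ ("clusters of rank $r$") such that: $n_0=1$ and rank-0 clusters are singletons; for $r\ge1$ every rank-$r$ cluster is a disjoint union of exactly $n_r$ rank-$(r-1)$ clusters; any two points lie in a common cluster of some rank. It is homogeneous of degree $n$ if $n_r=n$ for all $r\ge1$. $N_r=\prod_{s=0}^rn_s$, $Q_r(x)$ is the rank-$r$ cluster containing $x$, $d(x,y)=\min\{r:y\in Q_r(x)\}$, $(E_r\psi)(x)=\frac1{N_r}\sum_{d(x,y)\le r}\psi(y)$. $(p_r)_{r\ge1}$ are positive with $\sum p_r=1$, $p_0=0$, $\lambda_r=\sum_{s\le r}p_s$, and $\Delta=\sum_{r\ge0}p_rE_r$ on $\ell^2(X)$. The spectral measure $\mu$ of $\Delta$ and $\delta_x$ is the Borel probability measure with $\langle\delta_x,f(\Delta)\delta_x\rangle=\int f\,d\mu$ for bounded Borel $f$. The spectral dimension $\mathrm d$ is defined by $\lim_{t\downarrow0}\log\mu([1-t,1])/\log t=\mathrm d/2$ when this limit exists. *)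

theory Defs
  imports "HOL-Probability.Probability"
begin

text \<open>Hierarchical structure on a countably infinite set X: P r is the partition of X
  into clusters of rank r, nn r is the number of rank-(r-1) clusters in a rank-r cluster.\<close>

definition hier_struct :: "'a set \<Rightarrow> (nat \<Rightarrow> 'a set set) \<Rightarrow> (nat \<Rightarrow> nat) \<Rightarrow> bool" where
  "hier_struct X P nn \<longleftrightarrow>
     countable X \<and> infinite X \<and>
     (\<forall>r. nn r > 0) \<and> nn 0 = 1 \<and>
     (\<forall>r. partition_on X (P r)) \<and>
     P 0 = {{x} | x. x \<in> X} \<and>
     (\<forall>r. \<forall>C \<in> P (Suc r). \<exists>S. S \<subseteq> P r \<and> finite S \<and> card S = nn (Suc r) \<and> C = \<Union>S) \<and>
     (\<forall>x\<in>X. \<forall>y\<in>X. \<exists>r. \<exists>C\<in>P r. x \<in> C \<and> y \<in> C)"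

definition homogeneous :: "(nat \<Rightarrow> nat) \<Rightarrow> nat \<Rightarrow> bool" where
  "homogeneous nn n \<longleftrightarrow> (\<forall>r\<ge>1. nn r = n)"

definition NN :: "(nat \<Rightarrow> nat) \<Rightarrow> nat \<Rightarrow> nat" where
  "NN nn r = (\<Prod>s\<le>r. nn s)"

definition clusterQ :: "(nat \<Rightarrow> 'a set set) \<Rightarrow> nat \<Rightarrow> 'a \<Rightarrow> 'a set" where
  "clusterQ P r x = (THE C. C \<in> P r \<and> x \<in> C)"

definition hdist :: "(nat \<Rightarrow> 'a set set) \<Rightarrow> 'a \<Rightarrow> 'a \<Rightarrow> nat" where
  "hdist P x y = (LEAST r. y \<in> clusterQ P r x)"

definition Eop :: "'a set \<Rightarrow> (nat \<Rightarrow> 'a set set) \<Rightarrow> (nat \<Rightarrow> nat) \<Rightarrow> nat \<Rightarrow> ('a \<Rightarrow> real) \<Rightarrow> 'a \<Rightarrow> real" where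
  "Eop X P nn r \<psi> x = (1 / real (NN nn r)) * (\<Sum>y\<in>{y\<in>X. hdist P x y \<le> r}. \<psi> y)"

definition Delta :: "'a set \<Rightarrow> (nat \<Rightarrow> 'a set set) \<Rightarrow> (nat \<Rightarrow> nat) \<Rightarrow> (nat \<Rightarrow> real) \<Rightarrow> ('a \<Rightarrow> real) \<Rightarrow> 'a \<Rightarrow> real" where
  "Delta X P nn p \<psi> x = (\<Sum>r. p r * Eop X P nn r \<psi> x)"

definition kdelta :: "'a \<Rightarrow> 'a \<Rightarrow> real" where
  "kdelta x = (\<lambda>y. if y = x then 1 else 0)"

definition spectral_measure_at ::
  "'a set \<Rightarrow> (nat \<Rightarrow> 'a set set) \<Rightarrow> (nat \<Rightarrow> nat) \<Rightarrow> (nat \<Rightarrow> real) \<Rightarrow> 'a \<Rightarrow> real measure \<Rightarrow> bool" where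
  "spectral_measure_at X P nn p x \<mu> \<longleftrightarrow>
     sets \<mu> = sets borel \<and> prob_space \<mu> \<and>
     (\<forall>k::nat. integrable \<mu> (\<lambda>t. t ^ k) \<and>
        ((Delta X P nn p ^^ k) (kdelta x)) x = (\<integral>t. t ^ k \<partial>\<mu>))"

end

theory Submission
  imports Defs "HOL-Probability.Probability"
begin

locale hs =
  fixes X :: "'a set" and P :: "nat \<Rightarrow> 'a set set" and nn :: "nat \<Rightarrow> nat"
  assumes H: "hier_struct X P nn"
begin

abbreviation Q where "Q r y \<equiv> clusterQ P r y"

lemmas H' = H[unfolded hier_struct_def]
lemma hs_pos: "nn r > 0" using H'[THEN conjunct2, THEN conjunct2, THEN conjunct1] by (rule spec)
lemma hs_nn0: "nn 0 = 1" using H'[THEN conjunct2, THEN conjunct2, THEN conjunct2, THEN conjunct1] .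
lemma hs_part: "partition_on X (P r)"
  using H'[THEN conjunct2, THEN conjunct2, THEN conjunct2, THEN conjunct2, THEN conjunct1] by (rule spec)
lemma hs_P0: "P 0 = {{x} | x. x \<in> X}"
  using H'[THEN conjunct2, THEN conjunct2, THEN conjunct2, THEN conjunct2, THEN conjunct2, THEN conjunct1] .
lemma hs_split: "C \<in> P (Suc r) \<Longrightarrow> \<exists>S. S \<subseteq> P r \<and> finite S \<and> card S = nn (Suc r) \<and> C = \<Union>S"
  using H'[THEN conjunct2, THEN conjunct2, THEN conjunct2, THEN conjunct2, THEN conjunct2, THEN conjunct2, THEN conjunct1]
  by (elim allE ballE) auto
lemma hs_conn: "y \<in> X \<Longrightarrow> z \<in> X \<Longrightarrow> \<exists>r. \<exists>C\<in>P r. y \<in> C \<and> z \<in> C"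
  using H'[THEN conjunct2, THEN conjunct2, THEN conjunct2, THEN conjunct2, THEN conjunct2, THEN conjunct2, THEN conjunct2]
  by (elim ballE) auto

lemma part: "partition_on X (P r)" by (rule hs_part)

lemma Q_unique: assumes "C \<in> P r" "y \<in> C" shows "Q r y = C"
proof -
  have dj: "disjoint (P r)" using partition_onD2[OF part] .
  have uniq: "D = C" if "D \<in> P r" "y \<in> D" for D
  proof (rule ccontr)
    assume "D \<noteq> C"
    then have "disjnt D C" using dj that(1) assms(1) unfolding pairwise_def by blast
    then show False using that(2) assms(2) unfolding disjnt_def by blast
  qed
  show ?thesis unfolding clusterQ_def
    by (rule the_equality) (use assms uniq in blast)+
qed

lemma Q_mem: assumes "y \<in> X" shows "Q r y \<in> P r" "y \<in> Q r y"
proof -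
  obtain C where C: "C \<in> P r" "y \<in> C" using partition_onD1[OF part, of r] assms by blast
  then show "Q r y \<in> P r" "y \<in> Q r y" using Q_unique[OF C] by auto
qed

lemma P_sub: "C \<in> P r \<Longrightarrow> C \<subseteq> X"
  using partition_onD1[OF part, of r] by blast

lemma Q_sub_X: "y \<in> X \<Longrightarrow> Q r y \<subseteq> X"
  using P_sub Q_mem by blast

lemma Q_eq: assumes "y \<in> X" "z \<in> Q r y" shows "Q r z = Q r y"
  using Q_unique[OF Q_mem(1)[OF assms(1)] assms(2)] .

lemma Q_sym: assumes "y \<in> X" "z \<in> X" shows "z \<in> Q r y \<longleftrightarrow> y \<in> Q r z"
  using Q_eq Q_mem assms by metis

lemma Q_0: assumes "y \<in> X" shows "Q 0 y = {y}"
proof -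
  have "{y} \<in> P 0" using hs_P0 assms by blast
  then show ?thesis using Q_unique by auto
qed

lemma Q_mono_Suc: assumes "y \<in> X" shows "Q r y \<subseteq> Q (Suc r) y"
proof -
  obtain S where S: "S \<subseteq> P r" "Q (Suc r) y = \<Union>S"
    using hs_split[OF Q_mem(1)[OF assms, of "Suc r"]] by blast
  then obtain D where D: "D \<in> S" "y \<in> D" using Q_mem(2)[OF assms, of "Suc r"] by auto
  then have "Q r y = D" using Q_unique S by blast
  then show ?thesis using S D by auto
qed

lemma Q_mono: assumes "y \<in> X" "r \<le> s" shows "Q r y \<subseteq> Q s y"
  using assms(2)
proof (induction s)
  case 0 then show ?case by simp
next
  case (Suc s) then show ?case
    using Q_mono_Suc[OF assms(1), of s] by (cases "r = Suc s") auto
qed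

lemma nn_pos: "nn r > 0" by (rule hs_pos)

lemma NN_Suc: "NN nn (Suc r) = nn (Suc r) * NN nn r"
  unfolding NN_def by simp

lemma NN_pos: "NN nn r > 0"
  unfolding NN_def using nn_pos by (simp add: prod_pos)

lemma Q_card: assumes "y \<in> X" shows "finite (Q r y) \<and> card (Q r y) = NN nn r"
  using assms
proof (induction r arbitrary: y)
  case 0
  have "nn 0 = 1" by (rule hs_nn0)
  then show ?case using Q_0[OF 0] by (simp add: NN_def)
next
  case (Suc r)
  obtain S where S: "S \<subseteq> P r" "finite S" "card S = nn (Suc r)" "Q (Suc r) y = \<Union>S"
    using hs_split[OF Q_mem(1)[OF Suc.prems, of "Suc r"]] by blast
  have D: "finite D \<and> card D = NN nn r" if "D \<in> S" for D
  proof -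
    have "D \<noteq> {}" using partition_onD3[OF part, of r] S that by blast
    then obtain z where z: "z \<in> D" by blast
    have zX: "z \<in> X" using P_sub S that z by blast
    have "Q r z = D" using Q_unique S that z by blast
    then show ?thesis using Suc.IH[OF zX] by simp
  qed
  have dj: "pairwise disjnt S" using partition_onD2[OF part, of r] S(1) pairwise_subset by blast
  have "card (\<Union>S) = sum card S" using card_Union_disjoint[OF dj] D by blast
  also have "\<dots> = card S * NN nn r" using D by simp
  finally show ?case using S D NN_Suc by simp
qed

lemma Q_conn: assumes "y \<in> X" "z \<in> X" shows "\<exists>r. z \<in> Q r y"
proof -
  obtain r C where "C \<in> P r" "y \<in> C" "z \<in> C" using hs_conn[OF assms] by blast
  then show ?thesis using Q_unique by blast
qed

lemma ball_eq: assumes "y \<in> X" shows "{z \<in> X. hdist P y z \<le> r} = Q r y"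
proof (intro set_eqI iffI)
  fix z assume z: "z \<in> {z \<in> X. hdist P y z \<le> r}"
  then obtain s where "z \<in> Q s y" using Q_conn assms by blast
  then have "z \<in> Q (hdist P y z) y" unfolding hdist_def by (rule LeastI)
  then show "z \<in> Q r y" using Q_mono[OF assms] z by blast
next
  fix z assume "z \<in> Q r y"
  then show "z \<in> {z \<in> X. hdist P y z \<le> r}"
    using Q_sub_X[OF assms] unfolding hdist_def by (auto intro: Least_le)
qed

lemma Eop_eq: assumes "y \<in> X" shows "Eop X P nn r \<psi> y = (\<Sum>w\<in>Q r y. \<psi> w) / NN nn r"
  unfolding Eop_def ball_eq[OF assms] by simp

end

context hs begin

lemma sum_E: assumes y: "y \<in> X"
  shows "(\<Sum>z\<in>Q s y. Eop X P nn t \<psi> z) = (\<Sum>w\<in>Q (max s t) y. \<psi> w) * NN nn s / NN nn (max s t)"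
proof (cases "t \<le> s")
  case True
  have fin: "finite (Q s y)" using Q_card[OF y] by blast
  have zX: "z \<in> X" if "z \<in> Q s y" for z using Q_sub_X[OF y] that by blast
  have sub: "Q t z = {w \<in> Q s y. w \<in> Q t z}" if "z \<in> Q s y" for z
    using Q_mono[OF zX[OF that] True] Q_eq[OF y that] by blast
  have cardeq: "{z \<in> Q s y. w \<in> Q t z} = Q t w" if "w \<in> Q s y" for w
    using Q_sym[OF zX[OF that]] zX Q_mono[OF zX[OF that] True] Q_eq[OF y that] by blast
  have "(\<Sum>z\<in>Q s y. Eop X P nn t \<psi> z) = (\<Sum>z\<in>Q s y. (\<Sum>w\<in>Q t z. \<psi> w)) / NN nn t"
    using Eop_eq zX by (simp add: sum_divide_distrib)
  also have "(\<Sum>z\<in>Q s y. (\<Sum>w\<in>Q t z. \<psi> w)) = (\<Sum>z\<in>Q s y. \<Sum>w\<in>Q s y. if w \<in> Q t z then \<psi> w else 0)"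
    apply (rule sum.cong[OF refl])
    apply (subst sub, assumption)
    using fin by (simp add: sum.inter_filter)
  also have "\<dots> = (\<Sum>w\<in>Q s y. \<Sum>z\<in>Q s y. if w \<in> Q t z then \<psi> w else 0)"
    by (rule sum.swap)
  also have "\<dots> = (\<Sum>w\<in>Q s y. \<psi> w * card {z \<in> Q s y. w \<in> Q t z})"
    apply (rule sum.cong[OF refl])
    using fin by (simp add: sum.inter_filter[symmetric])
  also have "\<dots> = (\<Sum>w\<in>Q s y. \<psi> w * NN nn t)"
    apply (rule sum.cong[OF refl])
    using cardeq Q_card zX by simp
  finally show ?thesis using True NN_pos[of t] NN_pos[of s]
    by (simp add: max_def sum_distrib_right[symmetric])
next
  case False
  have fin: "finite (Q s y)" using Q_card[OF y] by blast
  have QQ: "Q t z = Q t y" if "z \<in> Q s y" for z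
    using Q_eq[OF y] Q_mono[OF y, of s t] False that by auto
  have "(\<Sum>z\<in>Q s y. Eop X P nn t \<psi> z) = (\<Sum>z\<in>Q s y. (\<Sum>w\<in>Q t y. \<psi> w) / NN nn t)"
  proof (rule sum.cong[OF refl])
    fix z assume z: "z \<in> Q s y"
    then have zX: "z \<in> X" using Q_sub_X[OF y] by blast
    show "Eop X P nn t \<psi> z = (\<Sum>w\<in>Q t y. \<psi> w) / NN nn t"
      unfolding Eop_eq[OF zX] QQ[OF z] ..
  qed
  also have "\<dots> = card (Q s y) * (\<Sum>w\<in>Q t y. \<psi> w) / NN nn t" by simp
  finally show ?thesis using False Q_card[OF y] by (simp add: max_def)
qed

lemma Eop_bound: assumes y: "y \<in> X" and b: "\<forall>z\<in>X. \<bar>\<psi> z\<bar> \<le> 1"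
  shows "\<bar>Eop X P nn t \<psi> y\<bar> \<le> 1"
proof -
  have "\<bar>\<Sum>w\<in>Q t y. \<psi> w\<bar> \<le> (\<Sum>w\<in>Q t y. \<bar>\<psi> w\<bar>)" by (rule sum_abs)
  also have "\<dots> \<le> (\<Sum>w\<in>Q t y. 1)"
  proof (rule sum_mono)
    fix w assume "w \<in> Q t y"
    then have "w \<in> X" using Q_sub_X[OF y] by blast
    then show "\<bar>\<psi> w\<bar> \<le> 1" using b by blast
  qed
  also have "\<dots> = real (card (Q t y))" by (rule sum_constant[THEN trans]) simp
  also have "\<dots> = NN nn t" using Q_card[OF y, of t] by simp
  finally have le: "\<bar>\<Sum>w\<in>Q t y. \<psi> w\<bar> \<le> real (NN nn t)" .
  have Np: "0 < real (NN nn t)" using NN_pos[of t] by simp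
  have "\<bar>Eop X P nn t \<psi> y\<bar> = \<bar>\<Sum>w\<in>Q t y. \<psi> w\<bar> / real (NN nn t)"
    unfolding Eop_eq[OF y] using Np by (simp add: abs_divide)
  also have "\<dots> \<le> 1" using le Np by (simp add: divide_le_eq_1_pos)
  finally show ?thesis .
qed

end

locale hs2 = hs +
  fixes x :: 'a and p :: "nat \<Rightarrow> real"
  assumes xX: "x \<in> X" and pnn: "\<And>r. p r \<ge> 0" and psum: "p sums 1"
begin

definition av :: "nat \<Rightarrow> ('a \<Rightarrow> real) \<Rightarrow> real" where
  "av s \<psi> = (\<Sum>w\<in>Q s x. \<psi> w) / NN nn s"

abbreviation D where "D \<equiv> Delta X P nn p"

lemma p_summable: "summable p" using psum by (simp add: sums_iff)

lemma summable_pE: assumes y: "y \<in> X" and b: "\<forall>z\<in>X. \<bar>\<psi> z\<bar> \<le> 1"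
  shows "summable (\<lambda>t. p t * Eop X P nn t \<psi> y)"
  apply (rule summable_comparison_test[OF _ p_summable])
  using Eop_bound[OF y b] pnn by (auto simp: abs_mult intro!: mult_left_le)

lemma D_bound: assumes y: "y \<in> X" and b: "\<forall>z\<in>X. \<bar>\<psi> z\<bar> \<le> 1"
  shows "\<bar>D \<psi> y\<bar> \<le> 1"
proof -
  have le: "\<bar>p t * Eop X P nn t \<psi> y\<bar> \<le> p t" for t
    using Eop_bound[OF y b, of t] pnn[of t] by (simp add: abs_mult mult_left_le)
  have sa: "summable (\<lambda>t. \<bar>p t * Eop X P nn t \<psi> y\<bar>)"
    by (rule summable_comparison_test[OF _ p_summable]) (use le in auto)
  have "\<bar>D \<psi> y\<bar> \<le> (\<Sum>t. \<bar>p t * Eop X P nn t \<psi> y\<bar>)"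
    unfolding Delta_def by (rule summable_rabs[OF sa])
  also have "\<dots> \<le> (\<Sum>t. p t)"
    by (rule suminf_le[OF le sa p_summable])
  finally show ?thesis using psum by (simp add: sums_iff)
qed

lemma Dpow_bound: "\<forall>z\<in>X. \<bar>(D ^^ k) (kdelta x) z\<bar> \<le> 1"
  by (induction k) (auto simp: kdelta_def intro!: D_bound)

lemma av_D: assumes b: "\<forall>z\<in>X. \<bar>\<psi> z\<bar> \<le> 1"
  shows "av s (D \<psi>) = (\<Sum>t. p t * av (max s t) \<psi>)"
proof -
  have zX: "z \<in> X" if "z \<in> Q s x" for z using Q_sub_X[OF xX] that by blast
  have "(\<Sum>z\<in>Q s x. D \<psi> z) = (\<Sum>z\<in>Q s x. \<Sum>t. p t * Eop X P nn t \<psi> z)"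
    unfolding Delta_def ..
  also have "\<dots> = (\<Sum>t. \<Sum>z\<in>Q s x. p t * Eop X P nn t \<psi> z)"
    by (rule suminf_sum[symmetric]) (use summable_pE[OF zX b] in blast)
  also have "\<dots> = (\<Sum>t. p t * ((\<Sum>w\<in>Q (max s t) x. \<psi> w) * NN nn s / NN nn (max s t)))"
    by (simp add: sum_distrib_left[symmetric] sum_E[OF xX])
  finally have 1: "(\<Sum>z\<in>Q s x. D \<psi> z) = \<dots>" .
  have sm: "summable (\<lambda>t. p t * ((\<Sum>w\<in>Q (max s t) x. \<psi> w) * NN nn s / NN nn (max s t)))"
  proof -
    have "summable (\<lambda>t. \<Sum>z\<in>Q s x. p t * Eop X P nn t \<psi> z)"
      by (rule summable_sum) (use summable_pE[OF zX b] in blast)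
    then show ?thesis by (simp add: sum_distrib_left[symmetric] sum_E[OF xX])
  qed
  have "av s (D \<psi>) = (\<Sum>t. p t * ((\<Sum>w\<in>Q (max s t) x. \<psi> w) * NN nn s / NN nn (max s t))) / NN nn s"
    unfolding av_def 1 ..
  also have "\<dots> = (\<Sum>t. p t * ((\<Sum>w\<in>Q (max s t) x. \<psi> w) * NN nn s / NN nn (max s t)) / NN nn s)"
    by (rule suminf_divide[OF sm, symmetric])
  also have "\<dots> = (\<Sum>t. p t * av (max s t) \<psi>)"
    using NN_pos[of s] by (simp add: av_def)
  finally show ?thesis .
qed

end

lemma ennsum_swap: "(\<Sum>i. \<Sum>j. f i j :: ennreal) = (\<Sum>j. \<Sum>i. f i j)"
proof -
  have "(\<Sum>j. \<Sum>i. f i j) = (\<integral>\<^sup>+j. (\<Sum>i. f i j) \<partial>count_space UNIV)"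
    by (simp add: nn_integral_count_space_nat)
  also have "\<dots> = (\<Sum>i. \<integral>\<^sup>+j. f i j \<partial>count_space UNIV)"
    by (rule nn_integral_suminf) simp
  also have "\<dots> = (\<Sum>i. \<Sum>j. f i j)" by (simp add: nn_integral_count_space_nat)
  finally show ?thesis ..
qed

lemma real_swap:
  fixes f :: "nat \<Rightarrow> nat \<Rightarrow> real"
  assumes nn: "\<And>i j. f i j \<ge> 0" and s1: "\<And>i. summable (f i)" and s2: "summable (\<lambda>i. \<Sum>j. f i j)"
    and s3: "\<And>j. summable (\<lambda>i. f i j)" and s4: "summable (\<lambda>j. \<Sum>i. f i j)"
  shows "(\<Sum>i. \<Sum>j. f i j) = (\<Sum>j. \<Sum>i. f i j)"
proof -
  have a: "ennreal (\<Sum>i. \<Sum>j. f i j) = (\<Sum>i. \<Sum>j. ennreal (f i j))"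
    using nn s1 s2 by (simp add: suminf_ennreal2 suminf_nonneg)
  have b: "ennreal (\<Sum>j. \<Sum>i. f i j) = (\<Sum>j. \<Sum>i. ennreal (f i j))"
    using nn s3 s4 by (simp add: suminf_ennreal2 suminf_nonneg)
  have "ennreal (\<Sum>i. \<Sum>j. f i j) = ennreal (\<Sum>j. \<Sum>i. f i j)"
    unfolding a b by (rule ennsum_swap)
  then show ?thesis using nn s2 s4 s1 s3
    by (subst (asm) ennreal_inj) (auto intro!: suminf_nonneg)
qed

lemma suminf_if_ge: "(\<Sum>r. if s \<le> r then f r else 0) = (\<Sum>i. f (i + s))"
  and summable_if_ge: "summable (\<lambda>r. if s \<le> r then f r else (0::real)) \<longleftrightarrow> summable (\<lambda>i. f (i + s))"
proof -
  have e: "(\<lambda>i. (\<lambda>r. if s \<le> r then f r else 0) (i + s)) = (\<lambda>i. f (i + s))" by auto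
  show "summable (\<lambda>r. if s \<le> r then f r else (0::real)) \<longleftrightarrow> summable (\<lambda>i. f (i + s))"
    using summable_iff_shift[of "\<lambda>r. if s \<le> r then f r else (0::real)" s] e by simp
  show "(\<Sum>r. if s \<le> r then f r else 0) = (\<Sum>i. f (i + s))"
  proof (cases "summable (\<lambda>i. f (i + s))")
    case True
    then show ?thesis
      using sums_zero_iff_shift[of s "\<lambda>r. if s \<le> r then f r else 0"] e
      by (metis (no_types, lifting) not_le summable_sums sums_unique)
  next
    case False
    then have "\<not> summable (\<lambda>r. if s \<le> r then f r else (0::real))"
      using summable_iff_shift[of "\<lambda>r. if s \<le> r then f r else (0::real)" s] e by simp
    then have n1: "\<And>x. \<not> (\<lambda>r. if s \<le> r then f r else (0::real)) sums x" unfolding summable_def by blast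
    have n2: "\<And>x. \<not> (\<lambda>i. f (i + s)) sums x" using False unfolding summable_def by blast
    show ?thesis unfolding suminf_def using n1 n2 by presburger
  qed
qed

locale hs3 = hs2 +
  fixes n :: nat
  assumes hom: "homogeneous nn n" and n2: "n \<ge> 2"
begin

lemma NN_pow: "NN nn r = n ^ r"
proof (induction r)
  case 0 then show ?case using hs_nn0 by (simp add: NN_def)
next
  case (Suc r) then show ?case using hom by (simp add: NN_Suc homogeneous_def)
qed

definition q :: real where "q = 1 / n"
definition w :: "nat \<Rightarrow> real" where "w r = q ^ r * (1 - q)"
definition lam :: "nat \<Rightarrow> real" where "lam r = sum p {..r}"
definition b :: "nat \<Rightarrow> nat \<Rightarrow> real" where "b s k = (\<Sum>r. if s \<le> r then w r * lam r ^ k else 0)"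

lemma q_pos: "0 < q" and q_less1: "q < 1" and q_le: "q \<le> 1/2"
  using n2 by (auto simp: q_def field_simps)

lemma w_nn: "w r \<ge> 0" using q_pos q_less1 by (simp add: w_def)

lemma lam_nn: "lam r \<ge> 0" using pnn by (simp add: lam_def sum_nonneg)
lemma lam_le1: "lam r \<le> 1"
proof -
  have "lam r \<le> suminf p" unfolding lam_def
    by (rule sum_le_suminf[OF p_summable]) (use pnn in auto)
  then show ?thesis using psum by (simp add: sums_iff)
qed

lemma w_sums_shift: "(\<lambda>i. w (i + s)) sums q ^ s"
proof -
  have "(\<lambda>i. q ^ s * (1 - q) * q ^ i) sums (q ^ s * (1 - q) * (1 / (1 - q)))"
    by (intro sums_mult geometric_sums) (use q_pos q_less1 in auto)
  then show ?thesis using q_less1 by (simp add: w_def power_add mult_ac)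
qed

lemma w_summable: "summable w"
  using w_sums_shift[of 0] by (simp add: sums_iff)

lemma c_summable: "summable (\<lambda>r. if s \<le> r then w r * lam r ^ k else 0)"
  apply (rule summable_comparison_test[OF _ w_summable])
  using w_nn lam_nn lam_le1 by (auto intro!: mult_left_le power_le_one simp: abs_mult)

lemma b_nn: "b s k \<ge> 0"
  unfolding b_def by (rule suminf_nonneg[OF c_summable]) (use w_nn lam_nn in auto)

lemma b_le: "b s k \<le> 1"
proof -
  have "b s k \<le> suminf w"
    unfolding b_def
    apply (rule suminf_le[OF _ c_summable w_summable])
    using w_nn lam_nn lam_le1 by (auto intro!: mult_left_le power_le_one)
  also have "\<dots> = 1" using w_sums_shift[of 0] by (simp add: sums_iff)
  finally show ?thesis .
qed

lemma b0: "b s 0 = q ^ s"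
  unfolding b_def using w_sums_shift by (simp add: suminf_if_ge sums_iff)

lemma b_step: "(\<Sum>t. p t * b (max s t) k) = b s (Suc k)"
proof -
  define c where "c r = w r * lam r ^ k" for r
  have c_nn: "c r \<ge> 0" for r using w_nn lam_nn by (simp add: c_def)
  define f where "f t r = (if max s t \<le> r then p t * c r else 0)" for t r
  have f_nn: "f t r \<ge> 0" for t r using c_nn pnn by (simp add: f_def)
  have cs: "summable (\<lambda>r. if m \<le> r then c r else 0)" for m
    using c_summable unfolding c_def .
  have s1: "summable (f t)" for t
  proof -
    have eq: "f t = (\<lambda>r. p t * (if max s t \<le> r then c r else 0))" by (auto simp: f_def fun_eq_iff)
    show ?thesis unfolding eq by (rule summable_mult[OF cs])
  qed
  have row: "(\<Sum>r. f t r) = p t * b (max s t) k" for t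
    unfolding f_def b_def c_def
    by (subst suminf_mult[OF c_summable, symmetric]) (simp add: if_distrib cong: if_cong)
  have s2: "summable (\<lambda>t. \<Sum>r. f t r)"
    unfolding row
    apply (rule summable_comparison_test[OF _ p_summable])
    using pnn b_nn b_le by (auto intro!: mult_left_le simp: abs_mult)
  have col: "(\<Sum>t. f t r) = (if s \<le> r then c r * lam r else 0)" for r
  proof -
    have "(\<Sum>t. f t r) = sum (\<lambda>t. f t r) {..r}"
      by (rule suminf_finite) (auto simp: f_def)
    also have "\<dots> = (if s \<le> r then c r * lam r else 0)"
      by (auto simp: f_def lam_def sum_distrib_left mult.commute)
    finally show ?thesis .
  qed
  have s3: "summable (\<lambda>t. f t r)" for r
    by (rule summable_finite[of "{..r}"]) (auto simp: f_def)
  have s4: "summable (\<lambda>r. \<Sum>t. f t r)"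
  proof -
    have eq: "(\<lambda>r. if s \<le> r then c r * lam r else 0) = (\<lambda>r. if s \<le> r then w r * lam r ^ Suc k else 0)"
      by (auto simp: c_def fun_eq_iff mult_ac)
    show ?thesis unfolding col eq by (rule c_summable)
  qed
  have "(\<Sum>t. p t * b (max s t) k) = (\<Sum>t. \<Sum>r. f t r)" unfolding row ..
  also have "\<dots> = (\<Sum>r. \<Sum>t. f t r)" by (rule real_swap[OF f_nn s1 s2 s3 s4])
  also have "\<dots> = b s (Suc k)" unfolding col b_def c_def
    by (rule arg_cong[where f=suminf]) (auto simp: fun_eq_iff mult_ac)
  finally show ?thesis .
qed

lemma av_pow: "av s ((D ^^ k) (kdelta x)) = b s k"
proof (induction k arbitrary: s)
  case 0
  have "(\<Sum>w\<in>Q s x. kdelta x w) = 1"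
    using Q_card[OF xX, of s] Q_mem(2)[OF xX, of s] by (simp add: kdelta_def)
  then show ?case by (simp add: av_def b0 NN_pow q_def power_one_over)
next
  case (Suc k)
  have "av s ((D ^^ Suc k) (kdelta x)) = (\<Sum>t. p t * av (max s t) ((D ^^ k) (kdelta x)))"
    using av_D[OF Dpow_bound[of k]] by simp
  also have "\<dots> = b s (Suc k)" unfolding Suc.IH by (rule b_step)
  finally show ?case .
qed

lemma moment: "(D ^^ k) (kdelta x) x = (\<Sum>r. w r * lam r ^ k)"
proof -
  have "(D ^^ k) (kdelta x) x = av 0 ((D ^^ k) (kdelta x))"
    by (simp add: av_def Q_0[OF xX] NN_pow)
  then show ?thesis by (simp add: av_pow b_def)
qed

end

locale hs4 = hs3 +
  fixes \<rho> :: real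
  assumes ppos: "\<And>r. r \<ge> 1 \<Longrightarrow> p r > 0" and rho: "\<rho> > 1"
    and decay: "\<exists>C1 C2. C1 > 0 \<and> C2 > 0 \<and>
        (\<forall>\<^sub>F r in sequentially. C1 * \<rho> powr (- real r) \<le> p r \<and> p r \<le> C2 * \<rho> powr (- real r))"
begin

definition a :: real where "a = 1 / \<rho>"
definition tail :: "nat \<Rightarrow> real" where "tail r = 1 - lam r"

lemma a_pos: "0 < a" and a_less1: "a < 1" using rho by (auto simp: a_def)

lemma tail_sums: "(\<lambda>i. p (i + Suc r)) sums tail r"
  using sums_split_initial_segment[OF psum, of "Suc r"]
  by (simp add: tail_def lam_def lessThan_Suc_atMost)

lemma tail_pos: "tail r > 0"
proof -
  have "0 < (\<Sum>i. p (i + Suc r))"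
    by (rule suminf_pos2[of _ 0]) (use tail_sums pnn ppos in \<open>auto simp: sums_iff\<close>)
  then show ?thesis using tail_sums by (simp add: sums_iff)
qed

lemma lam_less1: "lam r < 1" using tail_pos[of r] by (simp add: tail_def)

lemma rpow: "\<rho> powr (- real r) = a ^ r"
  using rho by (simp add: powr_minus powr_realpow a_def power_one_over divide_inverse power_inverse)

lemma decay': "\<exists>C1 C2 R0. C1 > 0 \<and> C2 > 0 \<and> (\<forall>r\<ge>R0. C1 * a ^ r \<le> p r \<and> p r \<le> C2 * a ^ r)"
  using decay unfolding rpow eventually_sequentially by blast

lemma tail_bounds: "\<exists>K1 K2 R0. K1 > 0 \<and> K2 > 0 \<and> (\<forall>r\<ge>R0. K1 * a ^ r \<le> tail r \<and> tail r \<le> K2 * a ^ r)"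
proof -
  obtain C1 C2 R0 where C: "C1 > 0" "C2 > 0" "\<And>r. r \<ge> R0 \<Longrightarrow> C1 * a ^ r \<le> p r \<and> p r \<le> C2 * a ^ r"
    using decay' by blast
  have g: "(\<lambda>i. C * a ^ (i + Suc r)) sums (C * a / (1 - a) * a ^ r)" for C r
  proof -
    have "(\<lambda>i. C * a ^ Suc r * a ^ i) sums (C * a ^ Suc r * (1 / (1 - a)))"
      by (intro sums_mult geometric_sums) (use a_pos a_less1 in auto)
    then show ?thesis by (simp add: power_add mult_ac)
  qed
  show ?thesis
  proof (intro exI conjI allI impI)
    show "C1 * a / (1 - a) > 0" "C2 * a / (1 - a) > 0" using C a_pos a_less1 by auto
    fix r assume r: "r \<ge> R0"
    show "C1 * a / (1 - a) * a ^ r \<le> tail r"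
    proof (rule sums_le[OF _ g tail_sums])
      fix i show "C1 * a ^ (i + Suc r) \<le> p (i + Suc r)" using C(3)[of "i + Suc r"] r by linarith
    qed
    show "tail r \<le> C2 * a / (1 - a) * a ^ r"
    proof (rule sums_le[OF _ tail_sums g])
      fix i show "p (i + Suc r) \<le> C2 * a ^ (i + Suc r)" using C(3)[of "i + Suc r"] r by linarith
    qed
  qed
qed

lemma green: "(\<Sum>k. ennreal ((D ^^ k) (kdelta x) x)) = (\<Sum>r. ennreal (w r / tail r))"
proof -
  have sm: "summable (\<lambda>r. w r * lam r ^ k)" for k
    using c_summable[of 0 k] by simp
  have "(\<Sum>k. ennreal ((D ^^ k) (kdelta x) x)) = (\<Sum>k. \<Sum>r. ennreal (w r * lam r ^ k))"
    unfolding moment using sm w_nn lam_nn by (subst suminf_ennreal2) auto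
  also have "\<dots> = (\<Sum>r. \<Sum>k. ennreal (w r * lam r ^ k))" by (rule ennsum_swap)
  also have "\<dots> = (\<Sum>r. ennreal (w r / tail r))"
  proof (rule arg_cong[where f=suminf], rule ext)
    fix r
    have "(\<lambda>k. w r * lam r ^ k) sums (w r * (1 / (1 - lam r)))"
      by (intro sums_mult geometric_sums) (use lam_nn lam_less1 in auto)
    then show "(\<Sum>k. ennreal (w r * lam r ^ k)) = ennreal (w r / tail r)"
      using w_nn lam_nn by (subst suminf_ennreal_eq) (auto simp: tail_def)
  qed
  finally show ?thesis .
qed

lemma ratio: "q / a = \<rho> / n" using n2 rho by (simp add: q_def a_def)

lemma part2a: assumes "\<rho> \<ge> real n" shows "(\<Sum>k. ennreal ((D ^^ k) (kdelta x) x)) = \<infinity>"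
proof (rule ccontr)
  obtain K1 K2 R0 where K: "K1 > 0" "K2 > 0" "\<And>r. r \<ge> R0 \<Longrightarrow> K1 * a ^ r \<le> tail r \<and> tail r \<le> K2 * a ^ r"
    using tail_bounds by blast
  assume "(\<Sum>k. ennreal ((D ^^ k) (kdelta x) x)) \<noteq> \<infinity>"
  then have "summable (\<lambda>r. w r / tail r)"
    unfolding green using w_nn tail_pos
    by (intro summable_suminf_not_top) (auto simp: less_le)
  then have lim: "(\<lambda>r. w r / tail r) \<longlonglongrightarrow> 0" by (rule summable_LIMSEQ_zero)
  have "(1 - q) / K2 \<le> w r / tail r" if "r \<ge> R0" for r
  proof -
    have "1 \<le> (q / a) ^ r" using ratio assms n2 by (simp add: one_le_power)
    then have qa: "a ^ r \<le> q ^ r" using a_pos by (simp add: power_divide field_simps)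
    have "(1 - q) / K2 = (1 - q) * a ^ r / (K2 * a ^ r)" using a_pos by simp
    also have "\<dots> \<le> (1 - q) * q ^ r / (K2 * a ^ r)"
      using qa q_less1 K a_pos by (intro divide_right_mono mult_left_mono) auto
    also have "\<dots> \<le> (1 - q) * q ^ r / tail r"
      using K(3)[OF that] tail_pos q_less1 q_pos K(2) a_pos
      by (intro divide_left_mono) (auto intro!: mult_pos_pos)
    finally show ?thesis by (simp add: w_def mult_ac)
  qed
  then have "(1 - q) / K2 \<le> 0" by (intro LIMSEQ_le_const[OF lim]) blast
  then show False using q_less1 K by (simp add: divide_le_0_iff)
qed

lemma part2b: assumes "\<rho> < real n" shows "(\<Sum>k. ennreal ((D ^^ k) (kdelta x) x)) < \<infinity>"
proof -
  obtain K1 K2 R0 where K: "K1 > 0" "K2 > 0" "\<And>r. r \<ge> R0 \<Longrightarrow> K1 * a ^ r \<le> tail r \<and> tail r \<le> K2 * a ^ r"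
    using tail_bounds by blast
  have g: "summable (\<lambda>r. (1 - q) / K1 * (q / a) ^ r)"
    using ratio assms rho by (intro summable_mult summable_geometric) auto
  have "summable (\<lambda>r. w r / tail r)"
  proof (rule summable_comparison_test'[OF g])
    fix r assume r: "r \<ge> R0"
    have "w r / tail r \<le> (1 - q) * q ^ r / (K1 * a ^ r)"
      using K(3)[OF r] tail_pos q_less1 q_pos K a_pos
      by (simp add: w_def mult_ac) (intro divide_left_mono, auto)
    also have "\<dots> = (1 - q) / K1 * (q / a) ^ r" by (simp add: power_divide)
    finally show "norm (w r / tail r) \<le> (1 - q) / K1 * (q / a) ^ r"
      using w_nn tail_pos[of r] by simp
  qed
  then have "(\<Sum>r. ennreal (w r / tail r)) \<noteq> \<top>"
    by (rule ennreal_suminf_neq_top) (intro divide_nonneg_nonneg w_nn less_imp_le[OF tail_pos])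
  then show ?thesis unfolding green by (simp add: less_top[symmetric])
qed

end

lemma abs_pow_le: "\<bar>t::real\<bar> ^ k \<le> 1 + t ^ (2 * k)"
proof (cases "\<bar>t\<bar> \<le> 1")
  case True
  then have "\<bar>t\<bar> ^ k \<le> 1" by (simp add: power_le_one)
  moreover have "0 \<le> t ^ (2 * k)" by (simp add: power_mult)
  ultimately show ?thesis by linarith
next
  case False
  then have "\<bar>t\<bar> ^ k \<le> \<bar>t\<bar> ^ (2 * k)" by (intro power_increasing) auto
  also have "\<dots> = t ^ (2 * k)" by (simp add: power_even_abs)
  finally show ?thesis by linarith
qed

lemma cint_helper: fixes M :: "real measure" shows "(\<integral>t. c * complex_of_real (t ^ k) \<partial>M) = c * complex_of_real (\<integral>t. t ^ k \<partial>M)"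
proof -
  have "(\<integral>t. c * complex_of_real (t ^ k) \<partial>M) = c * (\<integral>t. complex_of_real (t ^ k) \<partial>M)"
    by (rule integral_mult_right_zero)
  also have "(\<integral>t. complex_of_real (t ^ k) \<partial>M) = complex_of_real (\<integral>t. t ^ k \<partial>M)"
    by (rule integral_complex_of_real)
  finally show ?thesis .
qed

lemma char_moments:
  assumes M: "real_distribution M" and I: "\<And>k. integrable M (\<lambda>t. t ^ k)"
    and B: "\<And>k. (\<integral>t. t ^ (2 * k) \<partial>M) \<le> B"
  shows "char M \<theta> = (\<Sum>k. (\<i> * of_real \<theta>) ^ k / fact k * complex_of_real (\<integral>t. t ^ k \<partial>M))"
proof -
  interpret real_distribution M by (rule M)
  define f where "f k t = (\<i> * of_real \<theta>) ^ k / fact k * complex_of_real (t ^ k)" for k t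
  have ex: "iexp (\<theta> * t) = (\<Sum>k. f k t)" for t
  proof -
    have "(\<lambda>k. (\<i> * complex_of_real (\<theta> * t)) ^ k /\<^sub>R fact k) sums iexp (\<theta> * t)"
      by (rule exp_converges)
    moreover have "(\<lambda>k. (\<i> * complex_of_real (\<theta> * t)) ^ k /\<^sub>R fact k) = (\<lambda>k. f k t)"
      by (auto simp: f_def scaleR_conv_of_real power_mult_distrib field_simps)
    ultimately show ?thesis by (simp add: sums_iff)
  qed
  have intf: "integrable M (f k)" for k
    unfolding f_def by (rule integrable_mult_right, rule integrable_of_real, rule I)
  have nf: "norm (f k t) = \<bar>\<theta>\<bar> ^ k / fact k * \<bar>t\<bar> ^ k" for k t
    by (simp add: f_def norm_mult norm_divide norm_power power_abs)
  have sm1: "AE t in M. summable (\<lambda>k. norm (f k t))"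
  proof (rule AE_I2)
    fix t
    have "summable (\<lambda>k. inverse (fact k) * (\<bar>\<theta>\<bar> * \<bar>t\<bar>) ^ k)" by (rule summable_exp)
    then show "summable (\<lambda>k. norm (f k t))" unfolding nf
      by (simp add: power_mult_distrib divide_inverse mult_ac)
  qed
  have sm2: "summable (\<lambda>k. \<integral>t. norm (f k t) \<partial>M)"
  proof (rule summable_comparison_test[OF _ summable_mult[OF summable_exp[of "\<bar>\<theta>\<bar>"], of "1 + B"]])
    show "\<exists>N. \<forall>k\<ge>N. norm (\<integral>t. norm (f k t) \<partial>M) \<le> (1 + B) * (inverse (fact k) * \<bar>\<theta>\<bar> ^ k)"
    proof (intro exI allI impI)
      fix k :: nat
      have ia: "integrable M (\<lambda>t. \<bar>t\<bar> ^ k)" using integrable_abs[OF I[of k]] by (simp add: power_abs)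
      have i2: "integrable M (\<lambda>t. 1 + t ^ (2 * k))"
        by (rule Bochner_Integration.integrable_add) (auto simp: I)
      have "(\<integral>t. \<bar>t\<bar> ^ k \<partial>M) \<le> (\<integral>t. 1 + t ^ (2 * k) \<partial>M)"
        by (rule integral_mono[OF ia i2 abs_pow_le])
      also have "\<dots> = (\<integral>t. 1 \<partial>M) + (\<integral>t. t ^ (2 * k) \<partial>M)"
        by (rule Bochner_Integration.integral_add) (auto simp: I)
      also have "\<dots> = 1 + (\<integral>t. t ^ (2 * k) \<partial>M)"
        using lebesgue_integral_const[of M "1::real"] prob_space by simp
      also have "\<dots> \<le> 1 + B" using B by simp
      finally have le: "(\<integral>t. \<bar>t\<bar> ^ k \<partial>M) \<le> 1 + B" .
      have e1: "(\<integral>t. norm (f k t) \<partial>M) = \<bar>\<theta>\<bar> ^ k / fact k * (\<integral>t. \<bar>t\<bar> ^ k \<partial>M)"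
        unfolding nf by simp
      have e2: "0 \<le> (\<integral>t. norm (f k t) \<partial>M)" by simp
      show "norm (\<integral>t. norm (f k t) \<partial>M) \<le> (1 + B) * (inverse (fact k) * \<bar>\<theta>\<bar> ^ k)"
      proof -
        have "\<bar>\<theta>\<bar> ^ k / fact k * (\<integral>t. \<bar>t\<bar> ^ k \<partial>M) \<le> \<bar>\<theta>\<bar> ^ k / fact k * (1 + B)"
          by (rule mult_left_mono[OF le]) simp
        then show ?thesis using e1 e2 by (simp add: divide_inverse mult_ac)
      qed
    qed
  qed
  have "char M \<theta> = (\<integral>t. (\<Sum>k. f k t) \<partial>M)" unfolding char_def ex ..
  also have "\<dots> = (\<Sum>k. integral\<^sup>L M (f k))"
    by (rule integral_suminf[OF intf sm1 sm2])
  also have "\<dots> = (\<Sum>k. (\<i> * of_real \<theta>) ^ k / fact k * complex_of_real (\<integral>t. t ^ k \<partial>M))"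
    unfolding f_def cint_helper ..
  finally show ?thesis .
qed

lemma moments_unique:
  assumes M1: "real_distribution M1" and M2: "real_distribution M2"
    and I1: "\<And>k. integrable M1 (\<lambda>t. t ^ k)" and I2: "\<And>k. integrable M2 (\<lambda>t. t ^ k)"
    and B: "\<And>k. (\<integral>t. t ^ (2 * k) \<partial>M1) \<le> B"
    and E: "\<And>k. (\<integral>t. t ^ k \<partial>M1) = (\<integral>t. t ^ k \<partial>M2)"
  shows "M1 = M2"
proof (rule Levy_uniqueness[OF M1 M2], rule ext)
  fix \<theta>
  have B2: "(\<integral>t. t ^ (2 * k) \<partial>M2) \<le> B" for k using B[of k] E[of "2 * k"] by simp
  show "char M1 \<theta> = char M2 \<theta>"
    unfolding char_moments[OF M1 I1 B] char_moments[OF M2 I2 B2] E ..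
qed


context hs4 begin

definition Dens where "Dens = density (count_space UNIV) (\<lambda>r. ennreal (w r))"
definition nu where "nu = distr Dens borel lam"

lemma lam_meas: "lam \<in> measurable Dens borel"
  unfolding Dens_def by simp

lemma Dens_prob: "prob_space Dens"
proof (rule prob_spaceI)
  have "emeasure Dens (space Dens) = (\<integral>\<^sup>+r. ennreal (w r) * indicator UNIV r \<partial>count_space UNIV)"
    unfolding Dens_def by (subst emeasure_density) auto
  also have "\<dots> = (\<Sum>r. ennreal (w r))" by (simp add: nn_integral_count_space_nat)
  also have "\<dots> = ennreal 1"
    by (rule suminf_ennreal_eq) (use w_nn w_sums_shift[of 0] in auto)
  finally show "emeasure Dens (space Dens) = 1" by simp
qed

lemma nu_rd: "real_distribution nu"
  unfolding real_distribution_def real_distribution_axioms_def nu_def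
  using prob_space.prob_space_distr[OF Dens_prob lam_meas] by simp

lemma nu_integral:
  assumes g: "g \<in> borel_measurable borel" and gb: "\<And>r. \<bar>g (lam r)\<bar> \<le> 1"
  shows "integrable nu g" "integral\<^sup>L nu g = (\<Sum>r. w r * g (lam r))"
proof -
  have gm: "(\<lambda>r. g (lam r)) \<in> borel_measurable (count_space UNIV)" by simp
  have sm: "summable (\<lambda>r. norm (w r *\<^sub>R g (lam r)))"
    apply (rule summable_comparison_test[OF _ w_summable])
    using w_nn gb by (auto simp: abs_mult intro!: mult_left_le)
  have ic: "integrable (count_space UNIV) (\<lambda>r. w r *\<^sub>R g (lam r))"
    using sm by (simp add: integrable_count_space_nat_iff)
  show "integrable nu g"
    unfolding nu_def Dens_def
    by (subst integrable_distr_eq[OF lam_meas[unfolded Dens_def] g],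
        subst integrable_density[OF gm]) (use ic w_nn in auto)
  show "integral\<^sup>L nu g = (\<Sum>r. w r * g (lam r))"
    unfolding nu_def Dens_def
    by (subst integral_distr[OF lam_meas[unfolded Dens_def] g],
        subst integral_density[OF gm]) (use ic w_nn in \<open>auto simp: integral_count_space_nat\<close>)
qed

lemma nu_moments: "integrable nu (\<lambda>t. t ^ k)" "(\<integral>t. t ^ k \<partial>nu) = (\<Sum>r. w r * lam r ^ k)"
  using nu_integral[of "\<lambda>t. t ^ k"] lam_nn lam_le1 by (auto simp: power_le_one)

lemma tail_mono: "r \<le> r' \<Longrightarrow> tail r' \<le> tail r"
  unfolding tail_def lam_def using pnn by (auto intro!: sum_mono2)

lemma tail_lim: "tail \<longlonglongrightarrow> 0"
proof -
  have "(\<lambda>r. sum p {..<r}) \<longlonglongrightarrow> 1" using psum by (simp add: sums_def)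
  then have "(\<lambda>r. sum p {..<Suc r}) \<longlonglongrightarrow> 1" by (rule LIMSEQ_Suc)
  then have "lam \<longlonglongrightarrow> 1" by (simp add: lam_def[abs_def] lessThan_Suc_atMost)
  then have "(\<lambda>r. 1 - lam r) \<longlonglongrightarrow> 1 - 1" by (intro tendsto_intros)
  then show ?thesis by (simp add: tail_def[abs_def])
qed

definition Rt :: "real \<Rightarrow> nat" where "Rt t = (LEAST r. tail r \<le> t)"

lemma Rt_ex: "t > 0 \<Longrightarrow> \<exists>r. tail r \<le> t"
  using tail_lim unfolding lim_sequentially by (metis dist_real_def diff_zero abs_le_iff less_le_not_le order_refl le_less)

lemma Rt_iff: assumes "t > 0" shows "Rt t \<le> r \<longleftrightarrow> tail r \<le> t"
proof
  assume "Rt t \<le> r"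
  moreover have "tail (Rt t) \<le> t" unfolding Rt_def using Rt_ex[OF assms] by (rule LeastI_ex)
  ultimately show "tail r \<le> t" using tail_mono by (meson order_trans)
next
  assume "tail r \<le> t" then show "Rt t \<le> r" unfolding Rt_def by (rule Least_le)
qed

lemma nu_interval: assumes "t > 0" shows "measure nu {1 - t..1} = q ^ Rt t"
proof -
  have "measure nu {1 - t..1} = integral\<^sup>L nu (indicator {1 - t..1})"
    by (simp add: nu_def)
  also have "\<dots> = (\<Sum>r. w r * indicator {1 - t..1} (lam r))"
    by (rule nu_integral(2)) auto
  also have "\<dots> = (\<Sum>r. if Rt t \<le> r then w r else 0)"
    using Rt_iff[OF assms] lam_le1 by (intro arg_cong[where f=suminf] ext) (auto simp: tail_def indicator_def)
  also have "\<dots> = q ^ Rt t" using w_sums_shift by (simp add: suminf_if_ge sums_iff)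
  finally show ?thesis .
qed

end

locale hs5 = hs4 +
  fixes \<mu> :: "real measure"
  assumes mu: "spectral_measure_at X P nn p x \<mu>"
begin

lemma mu_rd: "real_distribution \<mu>"
  using mu unfolding spectral_measure_at_def real_distribution_def real_distribution_axioms_def by blast

lemma mu_moments: "integrable \<mu> (\<lambda>t. t ^ k)" "(\<integral>t. t ^ k \<partial>\<mu>) = (\<Sum>r. w r * lam r ^ k)"
  using mu moment unfolding spectral_measure_at_def by metis+

lemma mu_nu: "\<mu> = nu"
proof (rule moments_unique[OF mu_rd nu_rd mu_moments(1) nu_moments(1)])
  show "(\<integral>t. t ^ (2 * k) \<partial>\<mu>) \<le> 1" for k
    using b_le[of 0 "2 * k"] unfolding mu_moments b_def by simp
  show "(\<integral>t. t ^ k \<partial>\<mu>) = (\<integral>t. t ^ k \<partial>nu)" for k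
    unfolding mu_moments nu_moments ..
qed

end

lemma g_lim:
  fixes N L c :: real assumes L: "L > 0"
  shows "((\<lambda>m. m * N / (m * L - c)) \<longlongrightarrow> N / L) at_top"
proof -
  have 1: "((\<lambda>m::real. N / (L - c * inverse m)) \<longlongrightarrow> N / (L - c * 0)) at_top"
    by (intro tendsto_intros tendsto_inverse_0_at_top filterlim_ident) (use L in auto)
  have 2: "eventually (\<lambda>m::real. N / (L - c * inverse m) = m * N / (m * L - c)) at_top"
  proof (rule eventually_mono[OF eventually_gt_at_top[of 0]])
    fix m :: real assume m: "0 < m"
    have "L - c * inverse m = (m * L - c) / m" using m by (simp add: field_simps)
    then show "N / (L - c * inverse m) = m * N / (m * L - c)" by (simp add: mult.commute)
  qed
  show ?thesis using tendsto_cong[OF 2] 1 by simp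
qed

context hs5 begin

lemma Rt_tendsto: "filterlim (\<lambda>t. real (Rt t)) at_top (at_right 0)"
proof (subst filterlim_at_top, intro allI)
  fix Z :: real
  define M where "M = nat \<lceil>Z\<rceil>"
  have "eventually (\<lambda>t. t \<in> {0<..<tail M}) (at_right 0)"
    by (rule eventually_at_right_real) (use tail_pos in simp)
  then show "eventually (\<lambda>t. Z \<le> real (Rt t)) (at_right 0)"
  proof (rule eventually_mono)
    fix t assume t: "t \<in> {0<..<tail M}"
    have "\<not> Rt t \<le> M" using Rt_iff[of t M] t by auto
    then have "M < Rt t" by simp
    then have "real M \<le> real (Rt t)" by simp
    moreover have "Z \<le> real M" unfolding M_def by linarith
    ultimately show "Z \<le> real (Rt t)" by linarith
  qed
qed

lemma f_eq: assumes t: "0 < t" "t < 1"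
  shows "ln (measure \<mu> {1 - t..1}) / ln t = real (Rt t) * ln (real n) / (- ln t)"
proof -
  have "ln (measure \<mu> {1 - t..1}) = real (Rt t) * ln q"
    unfolding mu_nu nu_interval[OF t(1)] using q_pos by (simp add: ln_realpow)
  also have "ln q = - ln (real n)" using n2 by (simp add: q_def ln_div)
  finally show ?thesis by simp
qed

lemma part1: "((\<lambda>t. ln (measure \<mu> {1 - t..1}) / ln t) \<longlongrightarrow> ln (real n) / ln \<rho>) (at_right 0)"
proof -
  obtain K1 K2 R0 where K: "K1 > 0" "K2 > 0" "\<And>r. r \<ge> R0 \<Longrightarrow> K1 * a ^ r \<le> tail r \<and> tail r \<le> K2 * a ^ r"
    using tail_bounds by blast
  define L where "L = ln \<rho>"
  define N where "N = ln (real n)"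
  have L: "L > 0" using rho by (simp add: L_def)
  have N: "N > 0" using n2 by (simp add: N_def)
  have lna: "ln a = - L" using rho by (simp add: a_def L_def ln_div)
  define c1 where "c1 = ln K1"
  define c2 where "c2 = L + ln K2"
  define g where "g c m = m * N / (m * L - c)" for c m :: real
  define Mb where "Mb = c2 / L + 1"
  have ev1: "eventually (\<lambda>t. t \<in> {0<..<min 1 (tail R0)}) (at_right 0)"
    by (rule eventually_at_right_real) (use tail_pos in simp)
  have ev2: "eventually (\<lambda>t. Mb \<le> real (Rt t)) (at_right 0)"
    using Rt_tendsto unfolding filterlim_at_top by blast
  have bounds: "g c1 (real (Rt t)) \<le> ln (measure \<mu> {1 - t..1}) / ln t \<and>
      ln (measure \<mu> {1 - t..1}) / ln t \<le> g c2 (real (Rt t))"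
    if t: "t \<in> {0<..<min 1 (tail R0)}" and Mt: "Mb \<le> real (Rt t)" for t
  proof -
    define R where "R = Rt t"
    have t0: "0 < t" "t < 1" "t < tail R0" using t by auto
    have RR0: "R0 < R" unfolding R_def using Rt_iff[OF t0(1), of R0] t0 by auto
    have tR: "tail R \<le> t" unfolding R_def by (rule Rt_iff[OF t0(1), THEN iffD1]) simp
    have tR1: "t < tail (R - 1)" unfolding R_def using Rt_iff[OF t0(1), of "R - 1"] RR0 R_def by auto
    have b1: "K1 * a ^ R \<le> tail R" using K(3)[of R] RR0 by simp
    have b2: "tail (R - 1) \<le> K2 * a ^ (R - 1)" using K(3)[of "R - 1"] RR0 by simp
    have lt: "- ln t > 0" using t0 by simp
    have "ln (K1 * a ^ R) \<le> ln t"
      using b1 tR K(1) a_pos t0 by (subst ln_le_cancel_iff) auto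
    then have up: "- ln t \<le> real R * L - c1"
      using K(1) a_pos by (simp add: ln_mult ln_realpow lna c1_def)
    have "ln t < ln (K2 * a ^ (R - 1))"
      using b2 tR1 K(2) a_pos t0 by (subst ln_less_cancel_iff) auto
    then have "ln t < ln K2 + real (R - 1) * (- L)"
      using K(2) a_pos by (simp add: ln_mult ln_realpow lna)
    moreover have "real (R - 1) = real R - 1" using RR0 by simp
    ultimately have lo: "real R * L - c2 < - ln t" by (simp add: c2_def algebra_simps)
    have lo0: "0 < real R * L - c2"
    proof -
      have "c2 / L + 1 \<le> real R" using Mt unfolding Mb_def R_def .
      then have "c2 + L \<le> real R * L" using L by (simp add: field_simps)
      then show ?thesis using L by linarith
    qed
    have fe: "ln (measure \<mu> {1 - t..1}) / ln t = real R * N / (- ln t)"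
      unfolding R_def N_def by (rule f_eq[OF t0(1,2)])
    have RN: "0 \<le> real R * N" using N by simp
    have A: "g c1 (real R) \<le> real R * N / (- ln t)"
      unfolding g_def by (rule divide_left_mono[OF up RN]) (rule mult_pos_pos; use lt up in linarith)
    have B: "real R * N / (- ln t) \<le> g c2 (real R)"
      unfolding g_def by (rule divide_left_mono[OF less_imp_le[OF lo] RN]) (rule mult_pos_pos; use lt lo0 lo in linarith)
    show ?thesis using A B fe unfolding R_def by simp
  qed
  have ev: "eventually (\<lambda>t. g c1 (real (Rt t)) \<le> ln (measure \<mu> {1 - t..1}) / ln t \<and>
      ln (measure \<mu> {1 - t..1}) / ln t \<le> g c2 (real (Rt t))) (at_right 0)"
    using eventually_conj[OF ev1 ev2] by (rule eventually_mono) (use bounds in blast)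
  have l1: "((\<lambda>t. g c1 (real (Rt t))) \<longlongrightarrow> N / L) (at_right 0)"
    unfolding g_def by (rule filterlim_compose[OF g_lim[OF L] Rt_tendsto])
  have l2: "((\<lambda>t. g c2 (real (Rt t))) \<longlongrightarrow> N / L) (at_right 0)"
    unfolding g_def by (rule filterlim_compose[OF g_lim[OF L] Rt_tendsto])
  have "((\<lambda>t. ln (measure \<mu> {1 - t..1}) / ln t) \<longlongrightarrow> N / L) (at_right 0)"
    by (rule tendsto_sandwich[OF _ _ l1 l2]) (use ev in \<open>auto elim: eventually_mono\<close>)
  then show ?thesis by (simp add: N_def L_def)
qed

end

theorem proposition3:
  fixes X :: "'a set" and P :: "nat \<Rightarrow> 'a set set" and nn :: "nat \<Rightarrow> nat"
    and n :: nat and p :: "nat \<Rightarrow> real" and \<rho> :: real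
    and x :: 'a and \<mu> :: "real measure"
  assumes hs: "hier_struct X P nn"
    and hom: "homogeneous nn n" and n2: "n \<ge> 2"
    and p0: "p 0 = 0" and ppos: "\<forall>r\<ge>1. p r > 0" and psum: "p sums 1"
    and rho: "\<rho> > 1"
    and decay: "\<exists>C1 C2. C1 > 0 \<and> C2 > 0 \<and>
        (\<forall>\<^sub>F r in sequentially. C1 * \<rho> powr (- real r) \<le> p r \<and> p r \<le> C2 * \<rho> powr (- real r))"
    and x: "x \<in> X"
    and mu: "spectral_measure_at X P nn p x \<mu>"
  shows "((\<lambda>t. ln (measure \<mu> {1 - t..1}) / ln t) \<longlongrightarrow> ln (real n) / ln \<rho>) (at_right 0)
     \<and> ((0 < 2 * (ln (real n) / ln \<rho>) \<and> 2 * (ln (real n) / ln \<rho>) \<le> 2) \<longleftrightarrow> real n \<le> \<rho>)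
     \<and> (\<rho> \<ge> real n \<longrightarrow> (\<Sum>k. ennreal (((Delta X P nn p ^^ k) (kdelta x)) x)) = \<infinity>)
     \<and> (\<rho> < real n \<longrightarrow> (\<Sum>k. ennreal (((Delta X P nn p ^^ k) (kdelta x)) x)) < \<infinity>)"
proof -
  have pnn: "p r \<ge> 0" for r
  proof (cases r)
    case 0 then show ?thesis using p0 by simp
  next
    case (Suc m) then show ?thesis using ppos less_imp_le[of 0 "p r"] by simp
  qed
  interpret hs5 X P nn x p n \<rho> \<mu>
  proof unfold_locales
    show "hier_struct X P nn" by (rule hs)
    show "x \<in> X" by (rule x)
    show "\<And>r. 0 \<le> p r" by (rule pnn)
    show "p sums 1" by (rule psum)
    show "homogeneous nn n" by (rule hom)
    show "2 \<le> n" by (rule n2)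
    show "\<And>r. 1 \<le> r \<Longrightarrow> 0 < p r" using ppos by blast
    show "1 < \<rho>" by (rule rho)
    show "\<exists>C1 C2. C1 > 0 \<and> C2 > 0 \<and>
        (\<forall>\<^sub>F r in sequentially. C1 * \<rho> powr (- real r) \<le> p r \<and> p r \<le> C2 * \<rho> powr (- real r))"
      by (rule decay)
    show "spectral_measure_at X P nn p x \<mu>" by (rule mu)
  qed
  have L: "ln \<rho> > 0" using rho by simp
  have N: "ln (real n) > 0" using n2 by simp
  have mid: "(0 < 2 * (ln (real n) / ln \<rho>) \<and> 2 * (ln (real n) / ln \<rho>) \<le> 2) \<longleftrightarrow> real n \<le> \<rho>"
  proof -
    have a1: "0 < 2 * (ln (real n) / ln \<rho>)" using L N by simp
    have "2 * (ln (real n) / ln \<rho>) \<le> 2 \<longleftrightarrow> ln (real n) / ln \<rho> \<le> 1" by linarith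
    also have "\<dots> \<longleftrightarrow> ln (real n) \<le> ln \<rho>" using L by (simp add: divide_le_eq_1_pos)
    also have "\<dots> \<longleftrightarrow> real n \<le> \<rho>" using n2 rho by (subst ln_le_cancel_iff) auto
    finally show ?thesis using a1 by blast
  qed
  show ?thesis using part1 mid part2a part2b by blast
qed

end
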